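(* If $n>3$, then $R(U_n)$ is dense in $\mathbb{C}$.
   Context: Let $\mathbf{T}=\{z\in\mathbb{C}:|z|=1\}$. An angle is an element of the quotient group $\mathbf{T}/\{\pm1\}$; in formulas an angle is represented by either of its two representatives $u\in\mathbf{T}$. For $p\in\mathbb{C}$ and an angle $u$, let $L_u(p)=\{p+ru: r\in\mathbb{R}\}$. For distinct angles $u,v$ and $p,q\in\mathbb{C}$, $I_{u,v}(p,q)$ denotes the unique point of $L_u(p)\cap L_v(q)$. For a subgroup $U$ of $\mathbf{T}/\{\pm1\}$, $R(U)$ denotes the smallest subset of $\mathbb{C}$ that contains $0$ and $1$ and such that $I_{u,v}(p,q)\in R(U)$ whenever $p,q\in R(U)$ and $u,v$ are distinct elements of $U$. For $n\ge 3$, $U_n$ denotes the cyclic subgroup of $\mathbf{T}/\{\pm1\}$ of order $n$ generated by the class of $e^{i\pi/n}$. *)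

theory Defs
  imports "HOL-Analysis.Analysis"
begin

text \<open>An angle (element of T/{+-1}) is represented by a unit complex number u;
  u and -u represent the same angle.\<close>

definition line :: "complex \<Rightarrow> complex \<Rightarrow> complex set" where
  "line u p = {p + complex_of_real r * u | r :: real. True}"

definition same_angle :: "complex \<Rightarrow> complex \<Rightarrow> bool" where
  "same_angle u v \<longleftrightarrow> v = u \<or> v = - u"

definition isect :: "complex \<Rightarrow> complex \<Rightarrow> complex \<Rightarrow> complex \<Rightarrow> complex" where
  "isect u v p q = (THE z. z \<in> line u p \<and> z \<in> line v q)"

text \<open>A subgroup U of T/{+-1} is represented by the set of all its representatives
  in T (a subset of T closed under negation).\<close>

inductive_set Rset :: "complex set \<Rightarrow> complex set" for U :: "complex set" where
  zero: "0 \<in> Rset U"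
| one: "1 \<in> Rset U"
| step: "\<lbrakk>p \<in> Rset U; q \<in> Rset U; u \<in> U; v \<in> U; \<not> same_angle u v\<rbrakk>
          \<Longrightarrow> isect u v p q \<in> Rset U"

text \<open>U_n: the cyclic subgroup generated by the class of exp(i pi/n); its set of
  representatives in T is {exp(i pi k/n) | k :: int}.\<close>

definition U_n :: "nat \<Rightarrow> complex set" where
  "U_n n = {exp (\<i> * complex_of_real (pi * real_of_int k / real n)) | k. k \<in> (UNIV :: int set)}"

end

theory Submission
  imports Defs
begin

lemma Im_ofr: "Im (complex_of_real a * w * cnj v) = a * Im (w * cnj v)"
  by (simp add: algebra_simps)

lemma isect_eq:
  assumes np: "Im (u * cnj v) \<noteq> 0"
    and z1: "z = p + complex_of_real r * u" and z2: "z = q + complex_of_real s * v"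
  shows "isect u v p q = z"
  unfolding isect_def
proof (rule the_equality)
  show "z \<in> line u p \<and> z \<in> line v q" using z1 z2 unfolding line_def by blast
next
  fix z' assume "z' \<in> line u p \<and> z' \<in> line v q"
  then obtain r' s' where r': "z' = p + complex_of_real r' * u" and s': "z' = q + complex_of_real s' * v"
    unfolding line_def by blast
  have "p + complex_of_real r * u - (p + complex_of_real r' * u) = q + complex_of_real s * v - (q + complex_of_real s' * v)"
    using z1 z2 r' s' by simp
  then have e: "complex_of_real (r - r') * u = complex_of_real (s - s') * v"
    by (simp add: algebra_simps)
  have "Im (complex_of_real (r - r') * u * cnj v) = Im (complex_of_real (s - s') * v * cnj v)"
    using e by simp
  then have "(r - r') * Im (u * cnj v) = (s - s') * Im (v * cnj v)"
    by (simp only: Im_ofr)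
  then have "(r - r') * Im (u * cnj v) = 0" by simp
  with np have "r = r'" by simp
  then show "z' = z" using z1 r' by simp
qed

lemma np_same: "Im (u * cnj v) \<noteq> 0 \<Longrightarrow> \<not> same_angle u v"
proof
  assume h: "Im (u * cnj v) \<noteq> 0" and "same_angle u v"
  then have "v = u \<or> v = - u" unfolding same_angle_def by auto
  then have "Im (u * cnj v) = 0" by auto
  with h show False by simp
qed

lemma np_sym: "Im (u * cnj v) \<noteq> 0 \<Longrightarrow> Im (v * cnj u) \<noteq> 0"
proof -
  have "Im (v * cnj u) = - Im (u * cnj v)" by (simp add: algebra_simps)
  then show "Im (u * cnj v) \<noteq> 0 \<Longrightarrow> Im (v * cnj u) \<noteq> 0" by linarith
qed

lemma memR:
  assumes "p \<in> Rset U" "q \<in> Rset U" "u \<in> U" "v \<in> U" "Im (u * cnj v) \<noteq> 0"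
    and "z = p + complex_of_real r * u" "z = q + complex_of_real s * v"
  shows "z \<in> Rset U"
proof -
  have "isect u v p q \<in> Rset U"
    using assms np_same by (intro Rset.step) auto
  then show ?thesis using isect_eq[OF assms(5-7)] by simp
qed

lemma divaux: "(D::real) \<noteq> 0 \<Longrightarrow> x * D = A * a - B * b \<Longrightarrow> x = A / D * a - B / D * b"
  by (simp add: field_simps)

lemma decomp:
  assumes np: "Im (u * cnj v) \<noteq> 0"
  shows "z = complex_of_real (Im (z * cnj v) / Im (u * cnj v)) * u
           + complex_of_real (Im (z * cnj u) / Im (v * cnj u)) * v"
proof -
  define D where "D = Im u * Re v - Re u * Im v"
  define c1 where "c1 = (Im z * Re v - Re z * Im v) / D"
  define c2 where "c2 = (Im z * Re u - Re z * Im u) / D"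
  have D0: "D \<noteq> 0" using np by (simp add: D_def)
  have e1: "Im (z * cnj v) / Im (u * cnj v) = c1" by (simp add: c1_def D_def)
  have m: "Im (v * cnj u) = - D" by (simp add: D_def algebra_simps)
  have m2: "Im (z * cnj u) = Im z * Re u - Re z * Im u" by simp
  have e2: "Im (z * cnj u) / Im (v * cnj u) = - c2"
    by (simp only: m m2 c2_def divide_minus_right)
  have r1: "Re z = c1 * Re u - c2 * Re v" unfolding c1_def c2_def
    using D0 by (rule divaux) (simp add: D_def algebra_simps)
  have r2: "Im z = c1 * Im u - c2 * Im v" unfolding c1_def c2_def
    using D0 by (rule divaux) (simp add: D_def algebra_simps)
  show ?thesis unfolding e1 e2
    by (rule complex_eqI) (simp_all add: r1 r2)
qed


lemma decomp_ex: "Im (u * cnj v) \<noteq> 0 \<Longrightarrow> \<exists>a b. z = complex_of_real a * u + complex_of_real b * v"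
  using decomp by blast

lemma proj:
  assumes "z \<in> Rset U" "u \<in> U" "v \<in> U" "Im (u * cnj v) \<noteq> 0"
    and "z = complex_of_real x * u + complex_of_real y * v"
  shows "complex_of_real x * u \<in> Rset U"
  by (rule memR[OF Rset.zero assms(1) assms(2,3,4), of _ x "-y"]) (use assms(5) in simp_all)

lemma sum2:
  assumes "complex_of_real x * u \<in> Rset U" "complex_of_real y * v \<in> Rset U" "u \<in> U" "v \<in> U" "Im (u * cnj v) \<noteq> 0"
  shows "complex_of_real x * u + complex_of_real y * v \<in> Rset U"
  by (rule memR[OF assms(2) assms(1) assms(3,4,5), of _ x y]) simp_all

lemma negl:
  assumes G: "complex_of_real a * u \<in> Rset U" and U: "u \<in> U" "v \<in> U" "t \<in> U"
    and n1: "Im (u * cnj v) \<noteq> 0" and n2: "Im (u * cnj t) \<noteq> 0" and n3: "Im (t * cnj v) \<noteq> 0"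
  shows "complex_of_real (- a) * u \<in> Rset U"
proof -
  obtain \<alpha> \<beta> where d: "u = complex_of_real \<alpha> * t + complex_of_real \<beta> * v"
    using decomp_ex[OF n3] by blast
  have e1: "complex_of_real a * u = complex_of_real (a * \<alpha>) * t + complex_of_real (a * \<beta>) * v"
    by (subst d) (simp add: algebra_simps)
  have s1: "complex_of_real (a * \<alpha>) * t \<in> Rset U"
    using proj[OF G U(3) U(2) n3 e1] .
  have e2: "complex_of_real (a * \<alpha>) * t = complex_of_real (- a * \<beta>) * v + complex_of_real a * u"
    using e1 by (simp add: algebra_simps)
  have s2: "complex_of_real (- a * \<beta>) * v \<in> Rset U"
    using proj[OF s1 U(2) U(1) np_sym[OF n1] e2] .
  have e3: "complex_of_real (- a * \<beta>) * v = complex_of_real (- a) * u + complex_of_real (a * \<alpha>) * t"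
    using e1 by (simp add: algebra_simps)
  show ?thesis
    using proj[OF s2 U(1) U(3) n2 e3] .
qed

lemma addl:
  assumes G: "complex_of_real a * u \<in> Rset U" "complex_of_real b * u \<in> Rset U"
    and U: "u \<in> U" "v \<in> U" "t \<in> U"
    and n1: "Im (u * cnj v) \<noteq> 0" and n2: "Im (u * cnj t) \<noteq> 0" and n3: "Im (t * cnj v) \<noteq> 0"
  shows "complex_of_real (a + b) * u \<in> Rset U"
proof -
  obtain \<gamma> \<delta> where d: "complex_of_real b * u = complex_of_real \<gamma> * t + complex_of_real \<delta> * v"
    using decomp_ex[OF n3] by blast
  have s1: "complex_of_real \<gamma> * t \<in> Rset U"
    using proj[OF G(2) U(3) U(2) n3 d] .
  have d': "complex_of_real b * u = complex_of_real \<delta> * v + complex_of_real \<gamma> * t"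
    using d by simp
  have s2: "complex_of_real \<delta> * v \<in> Rset U"
    using proj[OF G(2) U(2) U(3) np_sym[OF n3] d'] .
  have s3: "complex_of_real a * u + complex_of_real \<delta> * v \<in> Rset U"
    using sum2[OF G(1) s2 U(1) U(2) n1] .
  show ?thesis
    by (rule memR[OF s3 Rset.zero U(3) U(1) np_sym[OF n2], of _ \<gamma> "a + b"])
       (use d in \<open>simp_all add: algebra_simps\<close>)
qed


definition good3 :: "complex set \<Rightarrow> complex \<Rightarrow> complex \<Rightarrow> complex \<Rightarrow> bool" where
  "good3 U u v t \<longleftrightarrow> u \<in> U \<and> v \<in> U \<and> t \<in> U \<and> Im (u * cnj v) \<noteq> 0 \<and> Im (u * cnj t) \<noteq> 0
     \<and> Im (v * cnj t) \<noteq> 0"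

lemma neg_all:
  assumes g: "good3 U u v t" and z: "z \<in> Rset U"
  shows "- z \<in> Rset U"
proof -
  from g have U: "u \<in> U" "v \<in> U" "t \<in> U" and n: "Im (u * cnj v) \<noteq> 0" "Im (u * cnj t) \<noteq> 0"
     "Im (v * cnj t) \<noteq> 0" unfolding good3_def by auto
  obtain x y where d: "z = complex_of_real x * u + complex_of_real y * v"
    using decomp_ex[OF n(1)] by blast
  have d': "z = complex_of_real y * v + complex_of_real x * u" using d by simp
  have a1: "complex_of_real x * u \<in> Rset U" using proj[OF z U(1,2) n(1) d] .
  have a2: "complex_of_real y * v \<in> Rset U" using proj[OF z U(2,1) np_sym[OF n(1)] d'] .
  have b1: "complex_of_real (-x) * u \<in> Rset U"
    using negl[OF a1 U(1,2,3) n(1) n(2) np_sym[OF n(3)]] .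
  have b2: "complex_of_real (-y) * v \<in> Rset U"
    using negl[OF a2 U(2,1,3) np_sym[OF n(1)] n(3) np_sym[OF n(2)]] .
  have "complex_of_real (-x) * u + complex_of_real (-y) * v \<in> Rset U"
    using sum2[OF b1 b2 U(1,2) n(1)] .
  then show ?thesis using d by (simp add: algebra_simps)
qed

lemma add_all:
  assumes g: "good3 U u v t" and z: "z \<in> Rset U" and w: "w \<in> Rset U"
  shows "z + w \<in> Rset U"
proof -
  from g have U: "u \<in> U" "v \<in> U" "t \<in> U" and n: "Im (u * cnj v) \<noteq> 0" "Im (u * cnj t) \<noteq> 0"
     "Im (v * cnj t) \<noteq> 0" unfolding good3_def by auto
  obtain x y where d: "z = complex_of_real x * u + complex_of_real y * v"
    using decomp_ex[OF n(1)] by blast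
  have d': "z = complex_of_real y * v + complex_of_real x * u" using d by simp
  obtain x2 y2 where e: "w = complex_of_real x2 * u + complex_of_real y2 * v"
    using decomp_ex[OF n(1)] by blast
  have e': "w = complex_of_real y2 * v + complex_of_real x2 * u" using e by simp
  have a1: "complex_of_real x * u \<in> Rset U" using proj[OF z U(1,2) n(1) d] .
  have a2: "complex_of_real y * v \<in> Rset U" using proj[OF z U(2,1) np_sym[OF n(1)] d'] .
  have c1: "complex_of_real x2 * u \<in> Rset U" using proj[OF w U(1,2) n(1) e] .
  have c2: "complex_of_real y2 * v \<in> Rset U" using proj[OF w U(2,1) np_sym[OF n(1)] e'] .
  have b1: "complex_of_real (x + x2) * u \<in> Rset U"
    using addl[OF a1 c1 U(1,2,3) n(1) n(2) np_sym[OF n(3)]] .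
  have b2: "complex_of_real (y + y2) * v \<in> Rset U"
    using addl[OF a2 c2 U(2,1,3) np_sym[OF n(1)] n(3) np_sym[OF n(2)]] .
  have "complex_of_real (x + x2) * u + complex_of_real (y + y2) * v \<in> Rset U"
    using sum2[OF b1 b2 U(1,2) n(1)] .
  then show ?thesis using d e by (simp add: algebra_simps)
qed

lemma nat_mult_all:
  assumes g: "good3 U u v t" and z: "z \<in> Rset U"
  shows "of_nat k * z \<in> Rset U"
proof (induction k)
  case 0 then show ?case by (simp add: Rset.zero)
next
  case (Suc k)
  have "of_nat k * z + z \<in> Rset U" using add_all[OF g Suc z] .
  then show ?case by (simp add: algebra_simps)
qed

lemma int_mult_all:
  assumes g: "good3 U u v t" and z: "z \<in> Rset U"
  shows "of_int m * z \<in> Rset U"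
proof (cases "m \<ge> 0")
  case True
  then obtain k where "m = int k" by (metis nonneg_eq_int)
  then show ?thesis using nat_mult_all[OF g z, of k] by simp
next
  case False
  then obtain k where "m = - int k" by (metis nonneg_eq_int neg_0_le_iff_le minus_minus le_less not_le)
  then show ?thesis using neg_all[OF g nat_mult_all[OF g z, of k]] by simp
qed


lemma floor_approx:
  fixes a h :: real assumes "h > 0"
  shows "\<bar>a - of_int \<lfloor>a / h\<rfloor> * h\<bar> \<le> h"
proof -
  have f1: "of_int \<lfloor>a / h\<rfloor> \<le> a / h" by (rule of_int_floor_le)
  have f2: "a / h < of_int \<lfloor>a / h\<rfloor> + 1" by (rule real_of_int_floor_add_one_gt)
  have "of_int \<lfloor>a / h\<rfloor> * h \<le> a" using mult_right_mono[OF f1, of h] assms by simp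
  moreover have "a < (of_int \<lfloor>a / h\<rfloor> + 1) * h" using mult_strict_right_mono[OF f2 assms] assms by simp
  ultimately show ?thesis by (simp add: algebra_simps)
qed

lemma dense_lemma:
  fixes G :: "complex set" and \<mu> :: real and w :: complex
  assumes mul: "\<And>m z. z \<in> G \<Longrightarrow> of_int m * z \<in> G"
    and add: "\<And>z y. z \<in> G \<Longrightarrow> y \<in> G \<Longrightarrow> z + y \<in> G"
    and mu: "0 < \<mu>" "\<mu> < 1"
    and g1: "\<And>k. complex_of_real (\<mu> ^ k) \<in> G"
    and g2: "\<And>k. complex_of_real (\<mu> ^ k) * w \<in> G"
    and w: "Im w \<noteq> 0"
  shows "closure G = UNIV"
proof -
  have "z \<in> closure G" for z
  proof (unfold closure_approachable, intro allI impI)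
    fix e :: real assume e: "e > 0"
    define b where "b = Im z / Im w"
    define a where "a = Re z - b * Re w"
    have zab: "z = complex_of_real a + complex_of_real b * w"
      using w by (simp add: complex_eq_iff a_def b_def)
    have "e / (1 + norm w) > 0" using e by (simp add: add_pos_nonneg)
    then obtain k where k: "\<mu> ^ k < e / (1 + norm w)" using real_arch_pow_inv[OF _ mu(2)] by blast
    define h where "h = \<mu> ^ k"
    have h0: "h > 0" using mu by (simp add: h_def)
    define m where "m = \<lfloor>a / h\<rfloor>"
    define m' where "m' = \<lfloor>b / h\<rfloor>"
    define y where "y = of_int m * complex_of_real h + of_int m' * (complex_of_real h * w)"
    have yG: "y \<in> G" unfolding y_def h_def using add mul g1 g2 by blast
    have "z - y = complex_of_real (a - of_int m * h) + complex_of_real (b - of_int m' * h) * w"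
      unfolding zab y_def by (simp add: algebra_simps)
    then have "norm (z - y) \<le> \<bar>a - of_int m * h\<bar> + \<bar>b - of_int m' * h\<bar> * norm w"
      by (metis norm_triangle_ineq norm_mult norm_of_real)
    also have "\<dots> \<le> h + h * norm w"
      using floor_approx[OF h0, of a] floor_approx[OF h0, of b]
      by (intro add_mono mult_right_mono) (simp_all add: m_def m'_def)
    also have "\<dots> = h * (1 + norm w)" by (simp add: algebra_simps)
    also have "\<dots> < e" using k unfolding h_def
      by (simp add: pos_less_divide_eq add_pos_nonneg)
    finally have "dist y z < e" by (simp add: dist_norm norm_minus_commute)
    then show "\<exists>y\<in>G. dist y z < e" using yG by blast
  qed
  then show ?thesis by auto
qed


lemma cisU: "cis (real k * (pi / real n)) \<in> U_n n"
  unfolding U_n_def cis_conv_exp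
  by (rule CollectI, rule exI[of _ "int k"]) (simp add: mult.commute)

lemma oneU: "1 \<in> U_n n"
  using cisU[of 0 n] by simp

lemma Im_cis_cnj: "Im (cis a * cnj (cis b)) = sin (a - b)"
  by (simp add: cis_cnj cis_mult)

lemma Im_one_cnj: "Im (1 * cnj (cis b)) = - sin b"
  by simp

lemma trig_facts:
  assumes n: "n > 3"
  defines "th \<equiv> pi / real n"
  shows "sin th > 0" "sin (2 * th) > 0" "sin (3 * th) > 0" "cos th > 1/2"
proof -
  have n4: "real n \<ge> 4" using n by simp
  have th0: "th > 0" using n by (simp add: th_def)
  have th4: "th \<le> pi / 4" unfolding th_def using n4
    by (intro divide_left_mono) simp_all
  have "3 * th < pi" using th4 pi_gt_zero by linarith
  then show "sin th > 0" "sin (2 * th) > 0" "sin (3 * th) > 0"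
    using th0 by (auto intro!: sin_gt_zero)
  have "cos (pi / 3) < cos th"
    using th0 th4 pi_gt_zero by (intro cos_monotone_0_pi) auto
  then show "cos th > 1/2" by (simp add: cos_60)
qed


theorem mainTheorem11:
  fixes n :: nat
  assumes "n > 3"
  shows "closure (Rset (U_n n)) = UNIV"
proof -
  define th where "th = pi / real n"
  define G where "G = Rset (U_n n)"
  have S1: "sin th > 0" and S2: "sin (2 * th) > 0" and S3: "sin (3 * th) > 0" and C1: "cos th > 1/2"
    using trig_facts[OF assms] unfolding th_def by auto
  define t where "t = cis th"
  define s where "s = cis (2 * th)"
  define v where "v = cis (3 * th)"
  have tU: "t \<in> U_n n" using cisU[of 1 n] by (simp add: t_def th_def)
  have sU: "s \<in> U_n n" using cisU[of 2 n] by (simp add: s_def th_def)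
  have vU: "v \<in> U_n n" using cisU[of 3 n] by (simp add: v_def th_def)
  have uU: "1 \<in> U_n n" by (rule oneU)
  have T1: "sin (3 * th) * cos th - cos (3 * th) * sin th = sin (2 * th)"
    using sin_diff[of "3 * th" th] by (simp add: algebra_simps)
  have T2: "sin (3 * th) * cos (2 * th) - cos (3 * th) * sin (2 * th) = sin th"
    using sin_diff[of "3 * th" "2 * th"] by (simp add: algebra_simps)
  have n_1v: "Im (1 * cnj v) \<noteq> 0" using S3 by (simp add: v_def)
  have n_1t: "Im (1 * cnj t) \<noteq> 0" using S1 by (simp add: t_def)
  have n_1s: "Im (1 * cnj s) \<noteq> 0" using S2 by (simp add: s_def)
  have n_vt: "Im (v * cnj t) \<noteq> 0" using S2 unfolding v_def t_def Im_cis_cnj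
    by (simp add: algebra_simps)
  have n_vs: "Im (v * cnj s) \<noteq> 0" using S1 unfolding v_def s_def Im_cis_cnj
    by (simp add: algebra_simps)
  have g: "good3 (U_n n) 1 v t" unfolding good3_def by (intro conjI uU vU tU n_1v n_1t n_vt)
  define \<alpha> where "\<alpha> = - sin th / sin (2 * th)"
  define \<beta> where "\<beta> = sin (3 * th) / sin (2 * th)"
  define \<nu> where "\<nu> = sin (3 * th) / sin (2 * th)"
  define \<mu> where "\<mu> = (sin th / sin (2 * th)) ^ 2"
  have D1: "complex_of_real x = complex_of_real (x * \<alpha>) * v + complex_of_real (x * \<beta>) * t" for x
  proof (rule complex_eqI)
    show "Re (complex_of_real x) = Re (complex_of_real (x * \<alpha>) * v + complex_of_real (x * \<beta>) * t)"
      using S2 T1 unfolding \<alpha>_def \<beta>_def v_def t_def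
      by (simp add: field_simps) (metis T1 mult.commute)?
    show "Im (complex_of_real x) = Im (complex_of_real (x * \<alpha>) * v + complex_of_real (x * \<beta>) * t)"
      using S2 unfolding \<alpha>_def \<beta>_def v_def t_def
      by (simp add: field_simps)
  qed
  have D2: "v = complex_of_real \<alpha> * 1 + complex_of_real \<nu> * s"
  proof (rule complex_eqI)
    show "Re v = Re (complex_of_real \<alpha> * 1 + complex_of_real \<nu> * s)"
      using S2 T2 unfolding \<alpha>_def \<nu>_def v_def s_def
      by (simp add: field_simps) (metis T2 mult.commute)?
    show "Im v = Im (complex_of_real \<alpha> * 1 + complex_of_real \<nu> * s)"
      using S2 unfolding \<alpha>_def \<nu>_def v_def s_def
      by (simp add: field_simps)
  qed
  have amu: "\<alpha> * \<alpha> = \<mu>" unfolding \<alpha>_def \<mu>_def by (simp add: power2_eq_square)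
  have projv: "complex_of_real (x * \<alpha>) * v \<in> G" if "complex_of_real x \<in> G" for x
    using proj[OF that[unfolded G_def] vU tU n_vt D1[of x]] unfolding G_def .
  have scale: "complex_of_real (x * \<mu>) \<in> G" if "complex_of_real x \<in> G" for x
  proof -
    have e: "complex_of_real (x * \<alpha>) * v = complex_of_real (x * \<alpha> * \<alpha>) * 1 + complex_of_real (x * \<alpha> * \<nu>) * s"
      by (subst D2) (simp add: algebra_simps)
    have "complex_of_real (x * \<alpha> * \<alpha>) * 1 \<in> G"
      using proj[OF projv[OF that, unfolded G_def] uU sU n_1s e] unfolding G_def .
    then show ?thesis using amu by (simp add: mult.assoc)
  qed
  have powG: "complex_of_real (\<mu> ^ k) \<in> G" for k
  proof (induction k)
    case 0 then show ?case by (simp add: G_def Rset.one)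
  next
    case (Suc k) then show ?case using scale[OF Suc] by (simp add: mult.commute)
  qed
  have pow2: "complex_of_real (\<mu> ^ k) * (complex_of_real \<alpha> * v) \<in> G" for k
    using projv[OF powG[of k]] by (simp add: mult.assoc)
  have S12: "sin th < sin (2 * th)"
  proof -
    have "sin (2 * th) = 2 * sin th * cos th" by (rule sin_double)
    also have "\<dots> > sin th * 1" using S1 C1 by (simp add: mult_strict_left_mono)
    finally show ?thesis by simp
  qed
  have mu0: "0 < \<mu>" unfolding \<mu>_def using S1 S2 by simp
  have mu1: "\<mu> < 1" unfolding \<mu>_def using S1 S2 S12
    by (simp add: power_less_one_iff divide_less_eq)
  have wim: "Im (complex_of_real \<alpha> * v) \<noteq> 0"
    unfolding \<alpha>_def v_def using S1 S2 S3 by simp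
  show ?thesis unfolding G_def[symmetric]
    by (rule dense_lemma[OF _ _ mu0 mu1 powG pow2 wim])
       (auto simp: G_def intro: int_mult_all[OF g] add_all[OF g])
qed

end
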